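(* For any $0<\theta<1$ and all $\lambda_1,\lambda_2>0$ with $\lambda_1+\lambda_2<1$, \[ \dot{C}_{\mathrm{DI}}\big(A^{(\theta)}\big)=\lim_{n\to\infty}\frac{1}{n\log n}\log N_{\mathrm{DI}}(n,\lambda_1,\lambda_2)=1. \]
   Context: The channel $A=A^{(\theta)}$ has input and output alphabet $\mathbb{R}/\mathbb{Z}$ and maps $x$ to $A_x$, the uniform probability distribution (w.r.t. Lebesgue measure) on the arc $[x,x+\theta]\bmod\mathbb{Z}$. For $x^n\in(\mathbb{R}/\mathbb{Z})^n$, $A_{x^n}=A_{x_1}\otimes\cdots\otimes A_{x_n}$. An $(n,N,\lambda_1,\lambda_2)$-DI code is a family $\{(u_j,\mathcal{E}_j):j\in[N]\}$ with $u_j\in(\mathbb{R}/\mathbb{Z})^n$ and measurable $\mathcal{E}_j\subset(\mathbb{R}/\mathbb{Z})^n$, such that $A_{u_j}(\mathcal{E}_j)\ge1-\lambda_1$ for all $j$ and $A_{u_j}(\mathcal{E}_k)\le\lambda_2$ for $j\ne k$; $N_{\mathrm{DI}}(n,\lambda_1,\lambda_2)$ is the largest such $N$. Logarithms base 2; $\dot{C}_{\mathrm{DI}}(A)=\inf_{\lambda_1,\lambda_2>0}\liminf_{n\to\infty}\frac{1}{n\log n}\log N_{\mathrm{DI}}(n,\lambda_1,\lambda_2)$. *)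

theory Defs
  imports "HOL-Probability.Probability"
begin

text \<open>The circle R/Z is represented by the half-open interval [0,1) with its Borel
  sigma-algebra; a point of (R/Z)^n is a function in an extensional function on {..<n} with values in [0,1).\<close>

definition torus :: "nat \<Rightarrow> (nat \<Rightarrow> real) measure" where
  "torus n = PiM {..<n} (\<lambda>_. restrict_space borel {0..<1::real})"

definition chan :: "real \<Rightarrow> nat \<Rightarrow> (nat \<Rightarrow> real) \<Rightarrow> (nat \<Rightarrow> real) measure" where
  "chan \<theta> n x = distr (PiM {..<n} (\<lambda>_. uniform_measure lborel {0..\<theta>})) (torus n)
      (\<lambda>t. \<lambda>i\<in>{..<n}. frac (x i + t i))"

definition is_DI_code ::
  "real \<Rightarrow> nat \<Rightarrow> nat \<Rightarrow> real \<Rightarrow> real \<Rightarrow> (nat \<Rightarrow> nat \<Rightarrow> real) \<Rightarrow> (nat \<Rightarrow> (nat \<Rightarrow> real) set) \<Rightarrow> bool"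
  where
  "is_DI_code \<theta> n N l1 l2 u E \<longleftrightarrow>
     (\<forall>j<N. u j \<in> space (torus n) \<and> E j \<in> sets (torus n)) \<and>
     (\<forall>j<N. measure (chan \<theta> n (u j)) (E j) \<ge> 1 - l1) \<and>
     (\<forall>j<N. \<forall>k<N. j \<noteq> k \<longrightarrow> measure (chan \<theta> n (u j)) (E k) \<le> l2)"

definition N_DI :: "real \<Rightarrow> nat \<Rightarrow> real \<Rightarrow> real \<Rightarrow> enat" where
  "N_DI \<theta> n l1 l2 = Sup {enat N | N. \<exists>u E. is_DI_code \<theta> n N l1 l2 u E}"

definition DI_rate :: "real \<Rightarrow> nat \<Rightarrow> real \<Rightarrow> real \<Rightarrow> ereal" where
  "DI_rate \<theta> n l1 l2 = (case N_DI \<theta> n l1 l2 of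
      enat N \<Rightarrow> ereal (log 2 (real N) / (real n * log 2 (real n)))
    | \<infinity> \<Rightarrow> \<infinity>)"

definition C_DI_dot :: "real \<Rightarrow> ereal" where
  "C_DI_dot \<theta> = (INF l1\<in>{0<..}. INF l2\<in>{0<..}. liminf (\<lambda>n. DI_rate \<theta> n l1 l2))"

end

theory Submission
  imports Defs "HOL-Real_Asymp.Real_Asymp"
begin

abbreviation U :: "real \<Rightarrow> real measure" where "U \<theta> \<equiv> uniform_measure lborel {0..\<theta>}"
abbreviation PP :: "real \<Rightarrow> nat \<Rightarrow> (nat \<Rightarrow> real) measure" where "PP \<theta> n \<equiv> PiM {..<n} (\<lambda>_. U \<theta>)"
definition XX :: "nat \<Rightarrow> (nat \<Rightarrow> real) \<Rightarrow> (nat \<Rightarrow> real) \<Rightarrow> (nat \<Rightarrow> real)" where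
 "XX n x = (\<lambda>t. \<lambda>i\<in>{..<n}. frac (x i + t i))"

lemma U_prob: "0 < \<theta> \<Longrightarrow> prob_space (U \<theta>)"
  by (intro prob_space_uniform_measure) auto
lemma PP_prob: "0 < \<theta> \<Longrightarrow> prob_space (PP \<theta> n)"
  by (intro prob_space_PiM U_prob)
lemma frac_meas[measurable]: "(frac :: real \<Rightarrow> real) \<in> borel_measurable borel"
proof -
  have "(\<lambda>x::real. x - real_of_int \<lfloor>x\<rfloor>) \<in> borel_measurable borel"
    by (rule borel_measurable_diff[OF measurable_ident_sets[OF refl] borel_measurable_real_floor])
  then show ?thesis by (simp add: frac_def[abs_def])
qed
lemma XX_meas: "XX n x \<in> measurable (PP \<theta> n) (torus n)"
  unfolding XX_def torus_def
  apply (intro measurable_restrict measurable_restrict_space2)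
   apply (auto simp: frac_lt_1)
  done
lemma chan_eq: "E \<in> sets (torus n) \<Longrightarrow> measure (chan \<theta> n x) E = measure (PP \<theta> n) (XX n x -` E \<inter> space (PP \<theta> n))"
  unfolding chan_def XX_def[symmetric] using XX_meas by (simp add: measure_distr)

lemma measure_U:
  assumes "0 < \<theta>" "X \<in> sets borel"
  shows "measure (U \<theta>) X = measure lborel ({0..\<theta>} \<inter> X) / \<theta>"
proof -
  have fin: "emeasure lborel ({0..\<theta>} \<inter> X) \<le> emeasure lborel {0..\<theta>}"
    using assms by (intro emeasure_mono) auto
  then have "emeasure lborel ({0..\<theta>} \<inter> X) \<noteq> \<top>"
    using assms by (auto simp: top_unique)
  then have e: "emeasure lborel ({0..\<theta>} \<inter> X) = ennreal (measure lborel ({0..\<theta>} \<inter> X))"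
    by (simp add: emeasure_eq_ennreal_measure)
  have "emeasure (U \<theta>) X = ennreal (measure lborel ({0..\<theta>} \<inter> X)) / ennreal \<theta>"
    using assms by (subst emeasure_uniform_measure) (auto simp: e)
  also have "\<dots> = ennreal (measure lborel ({0..\<theta>} \<inter> X) / \<theta>)"
    using assms by (intro divide_ennreal) auto
  finally have "emeasure (U \<theta>) X = ennreal (measure lborel ({0..\<theta>} \<inter> X) / \<theta>)" .
  moreover have "measure (U \<theta>) X = enn2real (emeasure (U \<theta>) X)" by (simp add: measure_def)
  ultimately show ?thesis using assms by simp
qed

lemma U_le:
  assumes "0 < \<theta>" "X \<in> sets borel" "{0..\<theta>} \<inter> X \<subseteq> {a..b}" "a \<le> b"
  shows "measure (U \<theta>) X \<le> (b - a) / \<theta>"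
proof -
  have "measure lborel ({0..\<theta>} \<inter> X) \<le> measure lborel {a..b}"
    using assms by (intro measure_mono_fmeasurable) (auto simp: fmeasurable_def)
  also have "\<dots> = b - a" using assms by (simp add: measure_def)
  finally show ?thesis using assms by (simp add: measure_U divide_right_mono)
qed

lemma U_ge_Ioo:
  assumes "0 < \<theta>" "X \<in> sets borel" "{a<..<b} \<subseteq> X" "0 \<le> a" "a \<le> b" "b \<le> \<theta>"
  shows "measure (U \<theta>) X \<ge> (b - a) / \<theta>"
proof -
  have "b - a = measure lborel {a<..<b}" using assms by (simp add: measure_def)
  also have "\<dots> \<le> measure lborel ({0..\<theta>} \<inter> X)"
  proof (rule measure_mono_fmeasurable)
    show "{0..\<theta>} \<inter> X \<in> fmeasurable lborel"
      using assms by (intro fmeasurable_Int_fmeasurable) (auto simp: fmeasurable_def)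
  qed (use assms in auto)
  finally show ?thesis using assms by (simp add: measure_U divide_right_mono)
qed

definition rot :: "real \<Rightarrow> real \<Rightarrow> real \<Rightarrow> real" where
  "rot \<theta> c t = (if t + c < \<theta> then t + c else t + c - \<theta>)"

lemma rot_meas[measurable]: "rot \<theta> c \<in> borel_measurable borel"
  unfolding rot_def[abs_def] by measurable

lemma shift_emeasure:
  assumes "B \<in> sets borel"
  shows "emeasure lborel {t. t + c \<in> B} = emeasure lborel (B::real set)"
proof -
  have "emeasure lborel B = emeasure (distr lborel borel ((+) c)) B" by (simp add: lborel_distr_plus)
  also have "\<dots> = emeasure lborel ((+) c -` B \<inter> space lborel)"
    using assms by (intro emeasure_distr) auto
  also have "(+) c -` B \<inter> space lborel = {t. t + c \<in> B}" by (auto simp: add.commute)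
  finally show ?thesis ..
qed

lemma closed_open_emeasure:
  assumes "X \<in> sets borel"
  shows "emeasure lborel ({0..\<theta>} \<inter> X) = emeasure lborel ({0..<(\<theta>::real)} \<inter> X)"
proof -
  have "{0..<\<theta>} \<inter> X = ({0..\<theta>} \<inter> X) - {\<theta>}" by auto
  then show ?thesis using assms
    by (intro emeasure_eq_AE) (use AE_lborel_singleton[of \<theta>] in auto)
qed

lemma rot_pres_lborel:
  assumes "0 \<le> c" "c < \<theta>" "A \<in> sets borel"
  shows "emeasure lborel ({0..\<theta>} \<inter> rot \<theta> c -` A) = emeasure lborel ({0..\<theta>} \<inter> A)"
proof -
  have mA: "rot \<theta> c -` A \<in> sets borel"
    using assms measurable_sets[OF rot_meas assms(3)] by simp
  define S1 where "S1 = (\<lambda>t. t + c) -` (A \<inter> {c..<\<theta>})"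
  define S2 where "S2 = (\<lambda>t. t + (c - \<theta>)) -` (A \<inter> {0..<c})"
  have eq1: "{0..<\<theta>} \<inter> rot \<theta> c -` A = S1 \<union> S2"
    using assms by (auto simp: S1_def S2_def rot_def add_diff_eq split: if_splits)
  have eq2: "{0..<\<theta>} \<inter> A = (A \<inter> {c..<\<theta>}) \<union> (A \<inter> {0..<c})"
    using assms by auto
  have m1: "S1 \<in> sets borel" "S2 \<in> sets borel"
    unfolding S1_def S2_def using assms by (auto intro!: measurable_sets_borel)
  have d: "S1 \<inter> S2 = {}" by (auto simp: S1_def S2_def)
  have "emeasure lborel ({0..\<theta>} \<inter> rot \<theta> c -` A) = emeasure lborel ({0..<\<theta>} \<inter> rot \<theta> c -` A)"
    using mA by (rule closed_open_emeasure)
  also have "\<dots> = emeasure lborel S1 + emeasure lborel S2"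
    unfolding eq1 using m1 d by (intro plus_emeasure[symmetric]) auto
  also have "\<dots> = emeasure lborel (A \<inter> {c..<\<theta>}) + emeasure lborel (A \<inter> {0..<c})"
  proof -
    have "emeasure lborel S1 = emeasure lborel (A \<inter> {c..<\<theta>})"
      unfolding S1_def vimage_def by (rule shift_emeasure) (use assms in auto)
    moreover have "emeasure lborel S2 = emeasure lborel (A \<inter> {0..<c})"
      unfolding S2_def vimage_def by (rule shift_emeasure) (use assms in auto)
    ultimately show ?thesis by simp
  qed
  also have "\<dots> = emeasure lborel ({0..<\<theta>} \<inter> A)"
    unfolding eq2 using assms by (intro plus_emeasure) auto
  also have "\<dots> = emeasure lborel ({0..\<theta>} \<inter> A)"
    using assms by (intro closed_open_emeasure[symmetric])
  finally show ?thesis .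
qed

lemma rot_pres_U:
  assumes "0 < \<theta>" "0 \<le> c" "c < \<theta>" "A \<in> sets borel"
  shows "emeasure (U \<theta>) (rot \<theta> c -` A) = emeasure (U \<theta>) A"
proof -
  have mA: "rot \<theta> c -` A \<in> sets borel"
    using assms measurable_sets[OF rot_meas assms(4)] by simp
  show ?thesis using assms mA by (simp add: rot_pres_lborel)
qed

lemma U_sets[simp]: "sets (U \<theta>) = sets borel" by simp
lemma U_space[simp]: "space (U \<theta>) = UNIV" by simp
lemma PP_space: "space (PP \<theta> n) = PiE {..<n} (\<lambda>_. UNIV)" by (simp add: space_PiM)

lemma PP_pps: "0 < \<theta> \<Longrightarrow> product_prob_space (\<lambda>_. U \<theta>)"
  by (intro product_prob_spaceI U_prob)

lemma PP_PiE_emeasure: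
  assumes "0 < \<theta>" "\<And>i. i < n \<Longrightarrow> A i \<in> sets borel"
  shows "emeasure (PP \<theta> n) (PiE {..<n} A) = (\<Prod>i<n. emeasure (U \<theta>) (A i))"
proof -
  interpret product_prob_space "\<lambda>_. U \<theta>" "{..<n}" using PP_pps[OF assms(1)] by simp
  show ?thesis using assms by (intro emeasure_PiM) auto
qed

lemma PP_PiE:
  assumes "0 < \<theta>" "\<And>i. i < n \<Longrightarrow> A i \<in> sets borel"
  shows "measure (PP \<theta> n) (PiE {..<n} A) = (\<Prod>i<n. measure (U \<theta>) (A i))"
proof -
  interpret Ui: prob_space "U \<theta>" using U_prob assms by auto
  have "emeasure (PP \<theta> n) (PiE {..<n} A) = (\<Prod>i<n. ennreal (measure (U \<theta>) (A i)))"
    using assms by (simp add: PP_PiE_emeasure Ui.emeasure_eq_measure)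
  also have "\<dots> = ennreal (\<Prod>i<n. measure (U \<theta>) (A i))"
    by (intro prod_ennreal) auto
  finally show ?thesis by (simp add: measure_def prod_nonneg)
qed

lemma PP_component:
  assumes "0 < \<theta>" "i < n" "B \<in> sets borel"
  shows "measure (PP \<theta> n) {t \<in> space (PP \<theta> n). t i \<in> B} = measure (U \<theta>) B"
proof -
  have "measure (U \<theta>) B = measure (distr (PP \<theta> n) (U \<theta>) (\<lambda>\<omega>. \<omega> i)) B"
    using assms by (subst distr_PiM_component) (auto intro: U_prob)
  also have "\<dots> = measure (PP \<theta> n) ((\<lambda>\<omega>. \<omega> i) -` B \<inter> space (PP \<theta> n))"
    using assms by (intro measure_distr) auto
  finally show ?thesis by (simp add: vimage_def Int_def conj_commute)
qed

definition rotv :: "real \<Rightarrow> nat \<Rightarrow> (nat \<Rightarrow> real) \<Rightarrow> (nat \<Rightarrow> real) \<Rightarrow> (nat \<Rightarrow> real)" where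
  "rotv \<theta> n c = (\<lambda>t. \<lambda>i\<in>{..<n}. rot \<theta> (c i) (t i))"

lemma rotv_meas: "rotv \<theta> n c \<in> measurable (PP \<theta> n) (PP \<theta> n)"
  unfolding rotv_def
  by (intro measurable_restrict measurable_compose[OF measurable_component_singleton]) auto

lemma rotv_pres:
  assumes "0 < \<theta>" "\<And>i. i < n \<Longrightarrow> 0 \<le> c i \<and> c i < \<theta>"
  shows "distr (PP \<theta> n) (PP \<theta> n) (rotv \<theta> n c) = PP \<theta> n"
proof -
  interpret product_prob_space "\<lambda>_. U \<theta>" "{..<n}" using PP_pps[OF assms(1)] by simp
  show ?thesis
  proof (rule PiM_eqI)
    fix A assume A: "\<And>i. i \<in> {..<n} \<Longrightarrow> A i \<in> sets (U \<theta>)"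
    have eq: "rotv \<theta> n c -` PiE {..<n} A \<inter> space (PP \<theta> n) = PiE {..<n} (\<lambda>i. rot \<theta> (c i) -` A i)"
      by (auto simp: rotv_def PP_space PiE_iff extensional_def)
    have "emeasure (distr (PP \<theta> n) (PP \<theta> n) (rotv \<theta> n c)) (PiE {..<n} A)
        = emeasure (PP \<theta> n) (rotv \<theta> n c -` PiE {..<n} A \<inter> space (PP \<theta> n))"
      using A by (intro emeasure_distr rotv_meas sets_PiM_I_finite) auto
    also have "\<dots> = (\<Prod>i<n. emeasure (U \<theta>) (rot \<theta> (c i) -` A i))"
      unfolding eq using A by (intro PP_PiE_emeasure assms(1) measurable_sets_borel[OF rot_meas]) auto
    also have "\<dots> = (\<Prod>i<n. emeasure (U \<theta>) (A i))"
      using A assms by (intro prod.cong refl rot_pres_U) auto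
    finally show "emeasure (distr (PP \<theta> n) (PP \<theta> n) (rotv \<theta> n c)) (PiE {..<n} A) = (\<Prod>i\<in>{..<n}. emeasure (U \<theta>) (A i))"
      by simp
  qed auto
qed

lemma torus_space: "space (torus n) = PiE {..<n} (\<lambda>_. {0..<1})"
  by (simp add: torus_def space_PiM space_restrict_space)

lemma neq_set_borel: "{s. rot \<theta> c s \<noteq> s + d} \<in> sets borel"
proof -
  have "{s. rot \<theta> c s \<noteq> s + d} = (\<lambda>s. rot \<theta> c s - (s + d)) -` (- {0})" by auto
  also have "\<dots> \<in> sets borel"
    by (intro measurable_sets_borel[of _ borel] borel_measurable_diff rot_meas borel_measurable_add) auto
  finally show ?thesis .
qed

lemma bad1:
  assumes "0 < \<theta>" "\<bar>d\<bar> < \<theta>"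
  shows "measure (U \<theta>) {s. rot \<theta> (if 0 \<le> d then d else d + \<theta>) s \<noteq> s + d} \<le> \<bar>d\<bar> / \<theta>"
proof (cases "0 \<le> d")
  case True
  have "measure (U \<theta>) {s. rot \<theta> (if 0 \<le> d then d else d + \<theta>) s \<noteq> s + d} \<le> (\<theta> - (\<theta> - d)) / \<theta>"
    using True assms by (intro U_le neq_set_borel) (auto simp: rot_def)
  then show ?thesis using True by simp
next
  case False
  have "measure (U \<theta>) {s. rot \<theta> (if 0 \<le> d then d else d + \<theta>) s \<noteq> s + d} \<le> (- d - 0) / \<theta>"
    using False assms by (intro U_le neq_set_borel) (auto simp: rot_def)
  then show ?thesis using False by simp
qed

lemma close_bound:
  assumes th: "0 < \<theta>" and x: "x \<in> space (torus n)" and y: "y \<in> space (torus n)"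
    and E: "E \<in> sets (torus n)" and dl: "\<And>i. i < n \<Longrightarrow> \<bar>x i - y i\<bar> \<le> \<delta>" and "\<delta> < \<theta>"
  shows "measure (chan \<theta> n x) E \<le> measure (chan \<theta> n y) E + real n * \<delta> / \<theta>"
proof -
  define d where "d i = x i - y i" for i
  define c where "c i = (if 0 \<le> d i then d i else d i + \<theta>)" for i
  have c: "\<And>i. i < n \<Longrightarrow> 0 \<le> c i \<and> c i < \<theta>"
    using dl assms(6) by (fastforce simp: c_def d_def abs_if)
  let ?P = "PP \<theta> n"
  interpret P: prob_space ?P using PP_prob th by blast
  define SX where "SX = XX n x -` E \<inter> space ?P"
  define SY where "SY = XX n y -` E \<inter> space ?P"
  have SY: "SY \<in> sets ?P" unfolding SY_def using E by (rule measurable_sets[OF XX_meas])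
  have SX: "SX \<in> sets ?P" unfolding SX_def using E by (rule measurable_sets[OF XX_meas])
  have rm: "rotv \<theta> n c \<in> measurable ?P ?P" by (rule rotv_meas)
  have "measure (chan \<theta> n y) E = measure ?P SY" unfolding SY_def using E by (rule chan_eq)
  also have "\<dots> = measure (distr ?P ?P (rotv \<theta> n c)) SY" using rotv_pres[OF th c] by simp
  also have "\<dots> = measure ?P (rotv \<theta> n c -` SY \<inter> space ?P)"
    using SY rm by (intro measure_distr) auto
  finally have eqY: "measure (chan \<theta> n y) E = measure ?P (rotv \<theta> n c -` SY \<inter> space ?P)" .
  define Bad where "Bad i = {t \<in> space ?P. t i \<in> {s. rot \<theta> (c i) s \<noteq> s + d i}}" for i
  have Badm: "Bad i \<in> sets ?P" if "i < n" for i
  proof -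
    have "Bad i = (\<lambda>t. t i) -` {s. rot \<theta> (c i) s \<noteq> s + d i} \<inter> space ?P"
      by (auto simp: Bad_def)
    also have "\<dots> \<in> sets ?P"
      using that neq_set_borel
      by (intro measurable_sets[OF measurable_component_singleton[of i "{..<n}" "\<lambda>_. U \<theta>"]]) auto
    finally show ?thesis .
  qed
  have Badle: "measure ?P (Bad i) \<le> \<delta> / \<theta>" if "i < n" for i
  proof -
    have "measure ?P (Bad i) = measure (U \<theta>) {s. rot \<theta> (c i) s \<noteq> s + d i}"
      unfolding Bad_def using th that neq_set_borel by (intro PP_component) auto
    also have "\<dots> \<le> \<bar>d i\<bar> / \<theta>" unfolding c_def
      using th dl[OF that] assms(6) by (intro bad1) (auto simp: d_def)
    also have "\<dots> \<le> \<delta> / \<theta>" using th dl[OF that] by (intro divide_right_mono) (auto simp: d_def)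
    finally show ?thesis .
  qed
  have sub: "SX \<subseteq> (rotv \<theta> n c -` SY \<inter> space ?P) \<union> (\<Union>i<n. Bad i)"
  proof
    fix t assume t: "t \<in> SX"
    show "t \<in> (rotv \<theta> n c -` SY \<inter> space ?P) \<union> (\<Union>i<n. Bad i)"
    proof (cases "t \<in> (\<Union>i<n. Bad i)")
      case False
      then have good: "\<And>i. i < n \<Longrightarrow> rot \<theta> (c i) (t i) = t i + d i"
        using t by (auto simp: Bad_def SX_def)
      have ts: "t \<in> space ?P" using t by (simp add: SX_def)
      have rs: "rotv \<theta> n c t \<in> space ?P" using measurable_space[OF rm ts] .
      have "XX n y (rotv \<theta> n c t) = XX n x t"
        by (auto simp: XX_def rotv_def good d_def fun_eq_iff algebra_simps)
      then show ?thesis using t rs ts by (auto simp: SY_def SX_def)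
    qed auto
  qed
  have "measure (chan \<theta> n x) E = measure ?P SX" unfolding SX_def using E by (rule chan_eq)
  also have "\<dots> \<le> measure ?P ((rotv \<theta> n c -` SY \<inter> space ?P) \<union> (\<Union>i<n. Bad i))"
    using sub Badm SY rm by (intro P.finite_measure_mono) (auto intro!: measurable_sets)
  also have "\<dots> \<le> measure ?P (rotv \<theta> n c -` SY \<inter> space ?P) + measure ?P (\<Union>i<n. Bad i)"
    using Badm SY rm by (intro measure_Un_le) (auto intro!: measurable_sets)
  also have "measure ?P (\<Union>i<n. Bad i) \<le> (\<Sum>i<n. measure ?P (Bad i))"
    using Badm by (intro P.finite_measure_subadditive_finite) auto
  also have "\<dots> \<le> (\<Sum>i<n. \<delta> / \<theta>)" using Badle by (intro sum_mono) auto
  also have "\<dots> = real n * \<delta> / \<theta>" by simp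
  finally show ?thesis using eqY by simp
qed

lemma code_le:
  assumes th: "0 < \<theta>" and code: "is_DI_code \<theta> n N l1 l2 u E" and K: "K > 0" "1 / real K < \<theta>"
    and small: "real n / (real K * \<theta>) < 1 - l1 - l2"
  shows "N \<le> K ^ n"
proof -
  define cell where "cell j = (\<lambda>i\<in>{..<n}. nat \<lfloor>real K * u j i\<rfloor>)" for j
  have us: "\<And>j. j < N \<Longrightarrow> u j \<in> space (torus n)" and Es: "\<And>j. j < N \<Longrightarrow> E j \<in> sets (torus n)"
    and own: "\<And>j. j < N \<Longrightarrow> measure (chan \<theta> n (u j)) (E j) \<ge> 1 - l1"
    and cross: "\<And>j k. j < N \<Longrightarrow> k < N \<Longrightarrow> j \<noteq> k \<Longrightarrow> measure (chan \<theta> n (u j)) (E k) \<le> l2"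
    using code unfolding is_DI_code_def by auto
  have inj: "inj_on cell {..<N}"
  proof (rule inj_onI, rule ccontr)
    fix j k assume j: "j \<in> {..<N}" and k: "k \<in> {..<N}" and eq: "cell j = cell k" and ne: "j \<noteq> k"
    have close: "\<bar>u j i - u k i\<bar> \<le> 1 / real K" if i: "i < n" for i
    proof -
      have r: "0 \<le> u j i" "0 \<le> u k i" using us[of j] us[of k] j k i by (auto simp: torus_space PiE_iff)
      have "nat \<lfloor>real K * u j i\<rfloor> = nat \<lfloor>real K * u k i\<rfloor>"
        using fun_cong[OF eq, of i] i by (simp add: cell_def)
      then have fl: "\<lfloor>real K * u j i\<rfloor> = \<lfloor>real K * u k i\<rfloor>" using r by (simp add: nat_eq_iff)
      have "\<bar>real K * u j i - real K * u k i\<bar> < 1"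
        using fl by linarith
      then have "real K * \<bar>u j i - u k i\<bar> \<le> 1" by (simp add: abs_mult right_diff_distrib[symmetric])
      then show ?thesis using K by (simp add: field_simps)
    qed
    have "measure (chan \<theta> n (u j)) (E j) \<le> measure (chan \<theta> n (u k)) (E j) + real n * (1 / real K) / \<theta>"
      using j k by (intro close_bound th us Es close K) auto
    also have "\<dots> \<le> l2 + real n / (real K * \<theta>)" using cross[of k j] j k ne by simp
    also have "\<dots> < 1 - l1" using small by simp
    finally show False using own[of j] j by simp
  qed
  have img: "cell ` {..<N} \<subseteq> PiE {..<n} (\<lambda>_. {..<K})"
  proof
    fix w assume "w \<in> cell ` {..<N}"
    then obtain j where j: "j < N" and w: "w = cell j" by auto
    have "nat \<lfloor>real K * u j i\<rfloor> < K" if "i < n" for i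
    proof -
      have "u j i < 1" using us[OF j] that by (auto simp: torus_space PiE_iff)
      then have "real K * u j i < real K" using K by simp
      then have "\<lfloor>real K * u j i\<rfloor> < int K" by linarith
      then show ?thesis using K by linarith
    qed
    then show "w \<in> PiE {..<n} (\<lambda>_. {..<K})" by (auto simp: w cell_def)
  qed
  have "N = card (cell ` {..<N})" using inj by (simp add: card_image)
  also have "\<dots> \<le> card (PiE {..<n} (\<lambda>_. {..<K}))" using img by (intro card_mono) (auto intro: finite_PiE)
  also have "\<dots> = K ^ n" by (simp add: card_PiE)
  finally show ?thesis .
qed

definition arcset :: "real \<Rightarrow> real \<Rightarrow> real set" where
  "arcset \<theta> v = {y. 0 \<le> y \<and> y < 1 \<and> frac (y - v) \<le> \<theta>}"

lemma arcset_borel: "arcset \<theta> v \<in> sets borel"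
proof -
  have "arcset \<theta> v = {0..<1} \<inter> (\<lambda>y. frac (y - v)) -` {..\<theta>}" by (auto simp: arcset_def)
  also have "\<dots> \<in> sets borel"
    by (intro sets.Int measurable_sets_borel[of _ borel] measurable_compose[OF _ frac_meas]) auto
  finally show ?thesis .
qed

lemma arcset_sets: "arcset \<theta> v \<in> sets (restrict_space borel {0..<1})"
  using arcset_borel by (subst sets_restrict_space_iff) (auto simp: arcset_def)

lemma arcsets_sets: "PiE {..<n} (\<lambda>i. arcset \<theta> (v i)) \<in> sets (torus n)"
  unfolding torus_def by (intro sets_PiM_I_finite arcset_sets) auto

lemma pre_borel: fixes a :: real shows "B \<in> sets borel \<Longrightarrow> {s. frac (a + s) \<in> B} \<in> sets borel"
proof -
  assume B: "B \<in> sets borel"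
  have "{s. frac (a + s) \<in> B} = (\<lambda>s. frac (a + s)) -` B" unfolding vimage_def by (rule refl)
  also have "\<dots> \<in> sets borel"
    by (rule measurable_sets_borel[OF measurable_compose[OF borel_measurable_continuous_onI[OF
          continuous_on_add[OF continuous_on_const continuous_on_id]] frac_meas] B])
  finally show ?thesis .
qed

lemma XX_PiE:
  "XX n x -` PiE {..<n} B \<inter> space (PP \<theta> n) = PiE {..<n} (\<lambda>i. {s. frac (x i + s) \<in> B i})"
proof (intro equalityI subsetI)
  fix t assume t: "t \<in> XX n x -` PiE {..<n} B \<inter> space (PP \<theta> n)"
  then have e: "t \<in> extensional {..<n}" by (simp add: PP_space PiE_def)
  have "\<forall>i<n. frac (x i + t i) \<in> B i"
  proof (intro allI impI)
    fix i assume i: "i < n"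
    have "XX n x t \<in> PiE {..<n} B" using t by blast
    then have "XX n x t i \<in> B i" using i by blast
    then show "frac (x i + t i) \<in> B i" using i by (simp add: XX_def)
  qed
  then show "t \<in> PiE {..<n} (\<lambda>i. {s. frac (x i + s) \<in> B i})"
    using e by (simp add: PiE_iff)
next
  fix t assume t: "t \<in> PiE {..<n} (\<lambda>i. {s. frac (x i + s) \<in> B i})"
  then have e: "t \<in> extensional {..<n}" and m: "\<And>i. i < n \<Longrightarrow> frac (x i + t i) \<in> B i"
    by (simp_all add: PiE_iff)
  have "t \<in> space (PP \<theta> n)" using e by (simp add: PP_space PiE_def)
  moreover have "XX n x t \<in> PiE {..<n} B" using m by (simp add: XX_def PiE_iff)
  ultimately show "t \<in> XX n x -` PiE {..<n} B \<inter> space (PP \<theta> n)" by blast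
qed
lemma chan_PiE:
  assumes th: "0 < \<theta>" and B: "\<And>i. i < n \<Longrightarrow> B i \<in> sets borel"
    and E: "PiE {..<n} B \<in> sets (torus n)"
  shows "measure (chan \<theta> n x) (PiE {..<n} B) = (\<Prod>i<n. measure (U \<theta>) {s. frac (x i + s) \<in> B i})"
proof -
  have "measure (chan \<theta> n x) (PiE {..<n} B) = measure (PP \<theta> n) (XX n x -` PiE {..<n} B \<inter> space (PP \<theta> n))"
    by (rule chan_eq[OF E])
  also have "\<dots> = measure (PP \<theta> n) (PiE {..<n} (\<lambda>i. {s. frac (x i + s) \<in> B i}))"
    by (simp only: XX_PiE)
  also have "\<dots> = (\<Prod>i<n. measure (U \<theta>) {s. frac (x i + s) \<in> B i})"
    by (rule PP_PiE[OF th pre_borel[OF B]])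
  finally show ?thesis .
qed

lemma own_one:
  assumes th: "0 < \<theta>" "\<theta> < 1"
  shows "measure (chan \<theta> n x) (PiE {..<n} (\<lambda>i. arcset \<theta> (x i))) = 1"
proof -
  interpret Ui: prob_space "U \<theta>" using U_prob th by auto
  have f1: "measure (U \<theta>) {s. frac (x i + s) \<in> arcset \<theta> (x i)} = 1" for i
  proof -
    have sub: "{0..\<theta>} \<subseteq> {s. frac (x i + s) \<in> arcset \<theta> (x i)}"
    proof
      fix s assume s: "s \<in> {0..\<theta>}"
      have "frac (x i + s) - x i = s + of_int (- \<lfloor>x i + s\<rfloor>)" by (simp add: frac_def)
      then have "frac (frac (x i + s) - x i) = frac s" by (simp add: frac_def)
      also have "\<dots> = s" using s th by (simp add: frac_eq)
      finally show "s \<in> {s. frac (x i + s) \<in> arcset \<theta> (x i)}"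
        using s by (auto simp: arcset_def frac_lt_1)
    qed
    have "1 = measure (U \<theta>) {0..\<theta>}"
      using th by (simp add: measure_U)
    also have "\<dots> \<le> measure (U \<theta>) {s. frac (x i + s) \<in> arcset \<theta> (x i)}"
      using sub pre_borel[OF arcset_borel] by (intro Ui.finite_measure_mono) auto
    finally show ?thesis using Ui.prob_le_1 by (intro antisym) auto
  qed
  have "measure (chan \<theta> n x) (PiE {..<n} (\<lambda>i. arcset \<theta> (x i)))
      = (\<Prod>i<n. measure (U \<theta>) {s. frac (x i + s) \<in> arcset \<theta> (x i)})"
    by (rule chan_PiE[where B="\<lambda>i. arcset \<theta> (x i)"]) (rule th(1), rule arcset_borel, rule arcsets_sets)
  also have "\<dots> = 1" by (simp add: f1)
  finally show ?thesis .
qed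

lemma cross1:
  assumes th: "0 < \<theta>" "\<theta> < 1" and ab: "a \<noteq> b" "a < M" "b < M"
    and M1: "1 / real M \<le> \<theta>" "1 / real M \<le> 1 - \<theta>"
  shows "measure (U \<theta>) {s. frac (real a / M + s) \<in> arcset \<theta> (real b / M)} \<le> 1 - 1 / (real M * \<theta>)"
proof -
  interpret Ui: prob_space "U \<theta>" using U_prob th by auto
  have M0: "real M > 0" using ab by simp
  define S where "S = {s. frac (real a / M + s) \<in> arcset \<theta> (real b / M)}"
  have Sb: "S \<in> sets borel" unfolding S_def by (intro pre_borel arcset_borel)
  define d where "d = (if b < a then (real a - real b) / M else 1 + (real a - real b) / M)"
  define c0 :: int where "c0 = (if b < a then 0 else -1)"
  have dc: "d + c0 = (real a - real b) / M" by (simp add: d_def c0_def)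
  have dlo: "1 / real M \<le> d" and dhi: "d \<le> 1 - 1 / real M"
  proof -
    have "b < a \<Longrightarrow> 1 \<le> real a - real b" "b < a \<Longrightarrow> real a - real b \<le> real M - 1"
         "\<not> b < a \<Longrightarrow> real a - real b \<le> - 1" "\<not> b < a \<Longrightarrow> - (real M - 1) \<le> real a - real b"
      using ab by linarith+
    note hh = this
    have e1: "1 - 1 / real M = (real M - 1) / real M" using M0 by (simp add: field_simps)
    show "1 / real M \<le> d"
    proof (cases "b < a")
      case True then show ?thesis using hh M0 by (simp add: d_def divide_right_mono)
    next
      case False
      have "1 / real M = (real M - 1 + (1 - real M) + 1) / real M" by simp
      also have "\<dots> \<le> (real M + (real a - real b)) / real M"
        using hh False M0 by (intro divide_right_mono) auto
      also have "\<dots> = d" using False M0 by (simp add: d_def field_simps)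
      finally show ?thesis .
    qed
    show "d \<le> 1 - 1 / real M"
    proof (cases "b < a")
      case True then show ?thesis unfolding e1 using hh M0 by (simp add: d_def divide_right_mono)
    next
      case False
      have "d = (real M + (real a - real b)) / real M" using False M0 by (simp add: d_def field_simps)
      also have "\<dots> \<le> (real M - 1) / real M"
        using hh False M0 by (intro divide_right_mono) auto
      finally show ?thesis unfolding e1 .
    qed
  qed
  define \<alpha> where "\<alpha> = (if d \<le> \<theta> then \<theta> - d else 0)"
  have J: "{\<alpha><..<\<alpha> + 1 / real M} \<subseteq> UNIV - S"
  proof
    fix s assume s: "s \<in> {\<alpha><..<\<alpha> + 1 / real M}"
    have ds0: "\<theta> < d + s \<and> d + s < 1 \<and> 0 \<le> d + s"
    proof (cases "d \<le> \<theta>")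
      case True
      then have "\<theta> - d < s" "s < \<theta> - d + 1 / real M" using s by (auto simp: \<alpha>_def)
      then show ?thesis using M1 dlo th by linarith
    next
      case False
      then have "0 < s" "s < 1 / real M" using s by (auto simp: \<alpha>_def)
      then show ?thesis using False M1 dhi dlo th by linarith
    qed
    then have ds: "\<theta> < d + s" "d + s < 1" "0 \<le> d + s" by auto
    define k where "k = c0 - \<lfloor>real a / M + s\<rfloor>"
    have eq: "frac (real a / M + s) - real b / M = (d + s) + of_int k"
    proof -
      have f: "frac (real a / M + s) = real a / M + s - of_int \<lfloor>real a / M + s\<rfloor>" by (simp add: frac_def)
      have g: "real a / M - real b / M = d + of_int c0" using dc by (simp add: diff_divide_distrib)
      show ?thesis unfolding k_def of_int_diff using f g by linarith
    qed
    have "frac ((d + s) + of_int k) = d + s" using ds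
      by (simp only: frac_add_of_int_right) (rule frac_eq[THEN iffD2], use ds in linarith)
    then have "frac (frac (real a / M + s) - real b / M) = d + s"
      by (simp only: eq)
    then have "\<not> frac (frac (real a / M + s) - real b / M) \<le> \<theta>" using ds by simp
    then have "frac (real a / M + s) \<notin> arcset \<theta> (real b / M)" unfolding arcset_def by blast
    then show "s \<in> UNIV - S" unfolding S_def by blast
  qed
  have "1 / real M / \<theta> = ((\<alpha> + 1 / real M) - \<alpha>) / \<theta>" by simp
  also have "\<dots> \<le> measure (U \<theta>) (UNIV - S)"
  proof (rule U_ge_Ioo)
    show "0 \<le> \<alpha>" unfolding \<alpha>_def by simp
    show "\<alpha> + 1 / real M \<le> \<theta>" using dlo M1 unfolding \<alpha>_def by simp
    show "\<alpha> \<le> \<alpha> + 1 / real M" using M0 by simp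
    show "UNIV - S \<in> sets borel" using Sb by (rule sets.compl_sets[of _ borel, simplified])
    show "0 < \<theta>" by (rule th(1))
    show "{\<alpha><..<\<alpha> + 1 / real M} \<subseteq> UNIV - S" by (rule J)
  qed
  also have "\<dots> = 1 - measure (U \<theta>) S"
  proof -
    have "S \<in> Ui.events" using Sb by simp
    from Ui.prob_compl[OF this] show ?thesis by simp
  qed
  finally show ?thesis by (simp add: S_def)
qed

definition hdist :: "nat \<Rightarrow> (nat \<Rightarrow> nat) \<Rightarrow> (nat \<Rightarrow> nat) \<Rightarrow> nat" where
  "hdist n w w' = card {i\<in>{..<n}. w i \<noteq> w' i}"

lemma hd_sym: "hdist n w w' = hdist n w' w"
  unfolding hdist_def by (metis)

lemma ball_card:
  fixes M D n :: nat assumes M: "M \<ge> 1"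
  shows "card {w \<in> PiE {..<n} (\<lambda>_. {..<M}). hdist n w c < D} \<le> 2 ^ n * M ^ D"
proof -
  define Bl where "Bl = {w \<in> PiE {..<n} (\<lambda>_. {..<M}). hdist n w c < D}"
  define P where "P w = {i\<in>{..<n}. w i \<noteq> c i}" for w :: "nat \<Rightarrow> nat"
  define \<phi> where "\<phi> w = (P w, restrict w (P w))" for w
  define S where "S = {Q. Q \<subseteq> {..<n} \<and> card Q < D}"
  define T where "T = Sigma S (\<lambda>Q. PiE Q (\<lambda>_. {..<M}))"
  have inj: "inj_on \<phi> Bl"
  proof (rule inj_onI)
    fix w1 w2 assume w1: "w1 \<in> Bl" and w2: "w2 \<in> Bl" and eq: "\<phi> w1 = \<phi> w2"
    then have Peq: "P w1 = P w2" and req: "restrict w1 (P w1) = restrict w2 (P w2)"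
      by (auto simp: \<phi>_def)
    have e1: "w1 \<in> extensional {..<n}" and e2: "w2 \<in> extensional {..<n}"
      using w1 w2 by (auto simp: Bl_def PiE_def)
    show "w1 = w2"
    proof (rule extensionalityI[OF e1 e2])
      fix i assume i: "i \<in> {..<n}"
      show "w1 i = w2 i"
      proof (cases "i \<in> P w1")
        case True
        then show ?thesis using fun_cong[OF req, of i] Peq by simp
      next
        case False
        then have "i \<notin> P w2" using Peq by simp
        then show ?thesis using False i by (simp add: P_def)
      qed
    qed
  qed
  have img: "\<phi> ` Bl \<subseteq> T"
  proof
    fix z assume "z \<in> \<phi> ` Bl"
    then obtain w where w: "w \<in> Bl" and z: "z = \<phi> w" by blast
    have "P w \<in> S" using w by (auto simp: S_def P_def Bl_def hdist_def)
    moreover have "restrict w (P w) \<in> PiE (P w) (\<lambda>_. {..<M})"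
      using w by (auto simp: Bl_def P_def PiE_iff)
    ultimately show "z \<in> T" by (simp add: z \<phi>_def T_def)
  qed
  have finS: "finite S" unfolding S_def by (rule finite_subset[of _ "Pow {..<n}"]) auto
  have "card Bl = card (\<phi> ` Bl)" using inj by (simp add: card_image)
  also have "\<dots> \<le> card T"
  proof (rule card_mono[OF _ img])
    have "\<And>Q. Q \<in> S \<Longrightarrow> finite Q" unfolding S_def by (auto intro: finite_subset)
    then show "finite T" unfolding T_def using finS by (intro finite_SigmaI finite_PiE) auto
  qed
  also have "card T = (\<Sum>Q\<in>S. card (PiE Q (\<lambda>_. {..<M})))"
    unfolding T_def using finS by (intro card_SigmaI) (auto simp: S_def intro!: finite_PiE intro: finite_subset)
  also have "\<dots> = (\<Sum>Q\<in>S. M ^ card Q)"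
  proof (intro sum.cong refl)
    fix Q assume "Q \<in> S"
    then have "finite Q" by (auto simp: S_def intro: finite_subset)
    then show "card (PiE Q (\<lambda>_. {..<M})) = M ^ card Q" by (simp add: card_PiE)
  qed
  also have "\<dots> \<le> (\<Sum>Q\<in>S. M ^ D)"
    using M by (intro sum_mono power_increasing) (auto simp: S_def)
  also have "\<dots> = card S * M ^ D" by simp
  also have "card S \<le> card (Pow {..<n})" unfolding S_def by (intro card_mono) auto
  also have "card (Pow {..<n}) = 2 ^ n" by (simp add: card_Pow)
  finally show ?thesis by (simp add: Bl_def)
qed

lemma GV:
  fixes M D n :: nat assumes M: "M \<ge> 1" and D: "D \<ge> 1"
  shows "\<exists>C \<subseteq> PiE {..<n} (\<lambda>_. {..<M}). (\<forall>w\<in>C. \<forall>w'\<in>C. w \<noteq> w' \<longrightarrow> D \<le> hdist n w w') \<and>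
           M ^ n \<le> card C * (2 ^ n * M ^ D)"
proof -
  define W where "W = PiE {..<n} (\<lambda>_::nat. {..<M})"
  have finW: "finite W" unfolding W_def by (intro finite_PiE) auto
  define F where "F = {C. C \<subseteq> W \<and> (\<forall>w\<in>C. \<forall>w'\<in>C. w \<noteq> w' \<longrightarrow> D \<le> hdist n w w')}"
  have FP: "F \<subseteq> Pow W" unfolding F_def by blast
  have finF: "finite F" using finite_subset[OF FP finite_Pow_iff[THEN iffD2, OF finW]] .
  have neF: "{} \<in> F" by (simp add: F_def)
  define m where "m = Max (card ` F)"
  have "m \<in> card ` F" unfolding m_def using finF neF by (intro Max_in) auto
  then obtain C where C: "C \<in> F" and Cm: "card C = m" by auto
  have maxC: "card C' \<le> card C" if "C' \<in> F" for C'
    unfolding Cm m_def using finF that by (intro Max_ge) auto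
  have CW: "C \<subseteq> W" using C by (simp add: F_def)
  have finC: "finite C" using CW finW by (rule finite_subset)
  have cover: "W \<subseteq> (\<Union>c\<in>C. {w \<in> W. hdist n w c < D})"
  proof
    fix w assume w: "w \<in> W"
    show "w \<in> (\<Union>c\<in>C. {w \<in> W. hdist n w c < D})"
    proof (rule ccontr)
      assume "w \<notin> (\<Union>c\<in>C. {w \<in> W. hdist n w c < D})"
      then have far: "\<forall>c\<in>C. D \<le> hdist n w c" using w by auto
      have "hdist n w w = 0" by (simp add: hdist_def)
      then have wC: "w \<notin> C" using far D by fastforce
      have "insert w C \<in> F"
        using C w far unfolding F_def by (auto simp: hd_sym)
      then have "card (insert w C) \<le> card C" by (rule maxC)
      then show False using wC finC by simp
    qed
  qed
  have "M ^ n = card W" unfolding W_def by (simp add: card_PiE)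
  also have "\<dots> \<le> card (\<Union>c\<in>C. {w \<in> W. hdist n w c < D})"
  proof (rule card_mono[OF _ cover])
    have "(\<Union>c\<in>C. {w \<in> W. hdist n w c < D}) \<subseteq> W" by blast
    then show "finite (\<Union>c\<in>C. {w \<in> W. hdist n w c < D})" using finW by (rule finite_subset)
  qed
  also have "\<dots> \<le> (\<Sum>c\<in>C. card {w \<in> W. hdist n w c < D})" using finC by (rule card_UN_le)
  also have "\<dots> \<le> (\<Sum>c\<in>C. 2 ^ n * M ^ D)"
    unfolding W_def using M by (intro sum_mono ball_card)
  also have "\<dots> = card C * (2 ^ n * M ^ D)" by simp
  finally have bound: "M ^ n \<le> card C * (2 ^ n * M ^ D)" .
  have far: "\<forall>w\<in>C. \<forall>w'\<in>C. w \<noteq> w' \<longrightarrow> D \<le> hdist n w w'" using C unfolding F_def by blast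
  show ?thesis
    by (rule exI[of _ C], intro conjI, fold W_def, rule CW, rule far, rule bound)
qed

definition vec :: "nat \<Rightarrow> nat \<Rightarrow> (nat \<Rightarrow> nat) \<Rightarrow> (nat \<Rightarrow> real)" where
  "vec M n w = (\<lambda>i\<in>{..<n}. real (w i) / real M)"

lemma cross_prod:
  assumes th: "0 < \<theta>" "\<theta> < 1"
    and w: "w \<in> PiE {..<n} (\<lambda>_. {..<M})" and w': "w' \<in> PiE {..<n} (\<lambda>_. {..<M})"
    and M1: "1 / real M \<le> \<theta>" "1 / real M \<le> 1 - \<theta>"
    and D: "D \<le> hdist n w w'" and Mp: "M > 0"
  shows "measure (chan \<theta> n (vec M n w')) (PiE {..<n} (\<lambda>i. arcset \<theta> (vec M n w i)))
          \<le> (1 - 1 / (real M * \<theta>)) ^ D"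
proof -
  interpret Ui: prob_space "U \<theta>" using U_prob th by auto
  define q where "q = 1 - 1 / (real M * \<theta>)"
  define f where "f i = measure (U \<theta>) {s. frac (vec M n w' i + s) \<in> arcset \<theta> (vec M n w i)}" for i
  define g where "g i = (if w i \<noteq> w' i then q else 1)" for i
  have Mpos: "real M > 0" using Mp by simp
  have q01: "0 \<le> q" "q \<le> 1"
  proof -
    have "1 / (real M * \<theta>) = (1 / real M) / \<theta>" by simp
    also have "\<dots> \<le> \<theta> / \<theta>" using M1 th by (intro divide_right_mono) auto
    also have "\<dots> = 1" using th by simp
    finally show "0 \<le> q" unfolding q_def by simp
    show "q \<le> 1" unfolding q_def using Mpos th by simp
  qed
  have fg: "0 \<le> f i \<and> f i \<le> g i" if i: "i < n" for i
  proof (cases "w i \<noteq> w' i")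
    case True
    have "w i < M" "w' i < M" using w w' i by (auto simp: PiE_iff)
    then have "f i \<le> q" unfolding f_def q_def vec_def using i True th M1
      by (simp add: cross1)
    then show ?thesis using True by (simp add: g_def f_def)
  next
    case False
    then show ?thesis by (simp add: g_def f_def)
  qed
  have "measure (chan \<theta> n (vec M n w')) (PiE {..<n} (\<lambda>i. arcset \<theta> (vec M n w i))) = (\<Prod>i<n. f i)"
    unfolding f_def
    by (rule chan_PiE[where B="\<lambda>i. arcset \<theta> (vec M n w i)"]) (rule th(1), rule arcset_borel, rule arcsets_sets)
  also have "\<dots> \<le> (\<Prod>i<n. g i)" using fg by (intro prod_mono) auto
  also have "(\<Prod>i<n. g i) = q ^ card ({..<n} \<inter> {i. w i \<noteq> w' i})"
    unfolding g_def by (simp add: prod.If_cases)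
  also have "card ({..<n} \<inter> {i. w i \<noteq> w' i}) = hdist n w w'"
    unfolding hdist_def by (rule arg_cong[where f=card]) blast
  also have "q ^ hdist n w w' \<le> q ^ D" by (rule power_decreasing[OF D q01])
  finally show ?thesis by (simp add: q_def)
qed

lemma vec_space:
  assumes "w \<in> PiE {..<n} (\<lambda>_. {..<M})"
  shows "vec M n w \<in> space (torus n)"
proof -
  have "real (w i) / real M < 1" if "i < n" for i
  proof -
    have "w i < M" using assms that by (auto simp: PiE_iff)
    then show ?thesis by simp
  qed
  then show ?thesis unfolding torus_space vec_def by (auto simp: PiE_iff)
qed

lemma achieve:
  assumes th: "0 < \<theta>" "\<theta> < 1" and l1: "0 < l1" and Mp: "M > 0"
    and M1: "1 / real M \<le> \<theta>" "1 / real M \<le> 1 - \<theta>" and D: "D \<ge> 1"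
    and q: "(1 - 1 / (real M * \<theta>)) ^ D \<le> l2"
  shows "\<exists>N u E. is_DI_code \<theta> n N l1 l2 u E \<and> M ^ n \<le> N * (2 ^ n * M ^ D)"
proof -
  obtain C where CW: "C \<subseteq> PiE {..<n} (\<lambda>_. {..<M})"
    and far: "\<forall>w\<in>C. \<forall>w'\<in>C. w \<noteq> w' \<longrightarrow> D \<le> hdist n w w'"
    and bound: "M ^ n \<le> card C * (2 ^ n * M ^ D)"
    using GV[of M D n] Mp D by auto
  have finC: "finite C" using CW by (rule finite_subset) (intro finite_PiE, auto)
  obtain h where h: "bij_betw h {0..<card C} C" using ex_bij_betw_nat_finite[OF finC] by blast
  define N where "N = card C"
  define u where "u j = vec M n (h j)" for j
  define E where "E j = PiE {..<n} (\<lambda>i. arcset \<theta> (u j i))" for j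
  have hC: "h j \<in> C" if "j < N" for j using h that by (auto simp: bij_betw_def N_def)
  have hinj: "h j \<noteq> h k" if "j < N" "k < N" "j \<noteq> k" for j k
    using h that unfolding bij_betw_def inj_on_def N_def by auto
  have "is_DI_code \<theta> n N l1 l2 u E"
    unfolding is_DI_code_def
  proof (intro conjI allI impI)
    fix j assume j: "j < N"
    show "u j \<in> space (torus n)" unfolding u_def using hC[OF j] CW by (intro vec_space) auto
    show "E j \<in> sets (torus n)" unfolding E_def by (rule arcsets_sets)
    have "measure (chan \<theta> n (u j)) (E j) = 1" unfolding E_def by (rule own_one[OF th])
    then show "1 - l1 \<le> measure (chan \<theta> n (u j)) (E j)" using l1 by simp
  next
    fix j k assume j: "j < N" and k: "k < N" and jk: "j \<noteq> k"
    have "measure (chan \<theta> n (u j)) (E k) \<le> (1 - 1 / (real M * \<theta>)) ^ D"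
      unfolding E_def u_def
    proof (rule cross_prod[OF th _ _ M1 _ Mp])
      show "h k \<in> PiE {..<n} (\<lambda>_. {..<M})" using hC[OF k] CW by auto
      show "h j \<in> PiE {..<n} (\<lambda>_. {..<M})" using hC[OF j] CW by auto
      show "D \<le> hdist n (h k) (h j)" using far hC[OF j] hC[OF k] hinj[OF k j] jk by auto
    qed
    then show "measure (chan \<theta> n (u j)) (E k) \<le> l2" using q by linarith
  qed
  then show ?thesis using bound unfolding N_def by blast
qed

lemma rate_lower:
  assumes code: "is_DI_code \<theta> n N l1 l2 u E" and N: "N \<ge> 1"
  shows "ereal (log 2 (real N) / (real n * log 2 (real n))) \<le> DI_rate \<theta> n l1 l2"
proof -
  have den: "0 \<le> real n * log 2 (real n)"
    by (cases "n = 0") auto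
  have "enat N \<le> N_DI \<theta> n l1 l2" unfolding N_DI_def using code by (intro Sup_upper) blast
  then show ?thesis
  proof (cases "N_DI \<theta> n l1 l2")
    case (enat N')
    with \<open>enat N \<le> N_DI \<theta> n l1 l2\<close> have "N \<le> N'" by simp
    then have "log 2 (real N) \<le> log 2 (real N')" using N by simp
    then have "log 2 (real N) / (real n * log 2 (real n)) \<le> log 2 (real N') / (real n * log 2 (real n))"
      using den by (rule divide_right_mono)
    then show ?thesis by (simp add: DI_rate_def enat)
  next
    case infinity
    then show ?thesis by (simp add: DI_rate_def)
  qed
qed

lemma rate_upper:
  assumes bnd: "\<And>N u E. is_DI_code \<theta> n N l1 l2 u E \<Longrightarrow> N \<le> B"
    and code: "is_DI_code \<theta> n N0 l1 l2 u0 E0" and N0: "N0 \<ge> 1"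
  shows "DI_rate \<theta> n l1 l2 \<le> ereal (log 2 (real B) / (real n * log 2 (real n)))"
proof -
  have den: "0 \<le> real n * log 2 (real n)"
    by (cases "n = 0") auto
  have le: "N_DI \<theta> n l1 l2 \<le> enat B" unfolding N_DI_def using bnd by (intro Sup_least) auto
  have ge: "enat N0 \<le> N_DI \<theta> n l1 l2" unfolding N_DI_def using code by (intro Sup_upper) blast
  obtain N' where N': "N_DI \<theta> n l1 l2 = enat N'" using le by (cases "N_DI \<theta> n l1 l2") auto
  have "N' \<le> B" "N0 \<le> N'" using le ge N' by auto
  then have "log 2 (real N') \<le> log 2 (real B)" using N0 by simp
  then have "log 2 (real N') / (real n * log 2 (real n)) \<le> log 2 (real B) / (real n * log 2 (real n))"
    using den by (rule divide_right_mono)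
  then show ?thesis by (simp add: DI_rate_def N')
qed

lemma nat_floor_bounds:
  fixes y :: real assumes "0 \<le> y"
  shows "y - 1 \<le> real (nat \<lfloor>y\<rfloor>)" "real (nat \<lfloor>y\<rfloor>) \<le> y"
proof -
  have e: "real (nat \<lfloor>y\<rfloor>) = real_of_int \<lfloor>y\<rfloor>" using assms by simp
  show "y - 1 \<le> real (nat \<lfloor>y\<rfloor>)" unfolding e by linarith
  show "real (nat \<lfloor>y\<rfloor>) \<le> y" unfolding e by linarith
qed

lemma ev_at_top: "filterlim f at_top F \<Longrightarrow> eventually (\<lambda>x. (c::real) \<le> f x) F"
  unfolding filterlim_at_top by blast

definition lo :: "nat \<Rightarrow> real" where
  "lo n = ((real n - real n / ln (real n)) * log 2 (real n / ln (real n) ^ 2 - 1) - real n)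
          / (real n * log 2 (real n))"

lemma lo_lim: "(lo \<longlongrightarrow> 1) sequentially"
  unfolding lo_def by real_asymp

lemma exp_bound:
  fixes y :: real and D :: nat assumes "0 \<le> 1 - y"
  shows "(1 - y) ^ D \<le> exp (- (real D * y))"
proof -
  have "(1 - y) ^ D \<le> exp (- y) ^ D"
    using assms exp_ge_add_one_self[of "- y"] by (intro power_mono) auto
  also have "\<dots> = exp (real D * (- y))" by (rule exp_of_nat_mult[symmetric])
  finally show ?thesis by simp
qed

lemma lower_point:
  assumes th: "0 < \<theta>" "\<theta> < 1" and l1: "0 < l1" and l2: "0 < l2"
    and L1: "1 \<le> ln (real n)" and n3: "3 \<le> n"
    and A1: "max (1 / \<theta>) (1 / (1 - \<theta>)) + 1 \<le> real n / ln (real n) ^ 2 - 1"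
    and B1: "1 \<le> real n / ln (real n) - 1"
    and C1: "ln (1 / l2) \<le> (real n / ln (real n) - 1) / ((real n / ln (real n) ^ 2) * \<theta>)"
  shows "\<exists>N u E. is_DI_code \<theta> n N l1 l2 u E \<and> N \<ge> 1 \<and> ereal (lo n) \<le> DI_rate \<theta> n l1 l2"
proof -
  define x where "x = real n"
  define L where "L = ln x"
  define a where "a = x / L ^ 2"
  define b where "b = x / L"
  have L: "1 \<le> L" using L1 by (simp add: L_def x_def)
  have x1: "1 < x"
    using n3 unfolding x_def by simp
  have A: "max (1 / \<theta>) (1 / (1 - \<theta>)) + 1 \<le> a - 1" using A1 by (simp add: a_def L_def x_def)
  have B: "1 \<le> b - 1" using B1 by (simp add: b_def L_def x_def)
  have Cc: "ln (1 / l2) \<le> (b - 1) / (a * \<theta>)" using C1 by (simp add: a_def b_def L_def x_def)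
  have apos: "0 < a" using A th by (smt (verit) max.cobounded1 zero_less_divide_1_iff)
  have bx: "b \<le> x" unfolding b_def using L x1 by (simp add: divide_le_eq)
  define M where "M = nat \<lfloor>a\<rfloor>"
  define D where "D = nat \<lfloor>b\<rfloor>"
  have Mlo: "a - 1 \<le> real M" and Mhi: "real M \<le> a" unfolding M_def using apos by (intro nat_floor_bounds; simp)+
  have Dlo: "b - 1 \<le> real D" and Dhi: "real D \<le> b" unfolding D_def using B by (intro nat_floor_bounds; simp)+
  have Mge: "max (1 / \<theta>) (1 / (1 - \<theta>)) + 1 \<le> real M" using A Mlo by linarith
  have M1r: "1 \<le> real M" using Mge th by (smt (verit) max.cobounded1 zero_less_divide_1_iff)
  then have Mp: "M > 0" by simp
  have Mth: "1 / real M \<le> \<theta>"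
  proof -
    have "1 / \<theta> \<le> real M" using Mge by simp
    then show ?thesis using th M1r by (simp add: field_simps)
  qed
  have Mth2: "1 / real M \<le> 1 - \<theta>"
  proof -
    have "1 / (1 - \<theta>) \<le> real M" using Mge by simp
    then show ?thesis using th M1r by (simp add: field_simps)
  qed
  have D1: "D \<ge> 1" using B Dlo by simp
  have q: "(1 - 1 / (real M * \<theta>)) ^ D \<le> l2"
  proof -
    have y1: "1 / (real M * \<theta>) \<le> 1"
    proof -
      have "1 / (real M * \<theta>) = (1 / real M) / \<theta>" by simp
      also have "\<dots> \<le> \<theta> / \<theta>" using Mth th by (intro divide_right_mono) auto
      also have "\<dots> = 1" using th by simp
      finally show ?thesis .
    qed
    have "(1 - 1 / (real M * \<theta>)) ^ D \<le> exp (- (real D * (1 / (real M * \<theta>))))"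
      using y1 by (intro exp_bound) simp
    also have "real D * (1 / (real M * \<theta>)) = real D / (real M * \<theta>)" by simp
    also have "(b - 1) / (a * \<theta>) \<le> real D / (real M * \<theta>)"
      using B Dlo Mhi Mp th by (intro frac_le mult_right_mono) auto
    then have "exp (- (real D / (real M * \<theta>))) \<le> exp (- ln (1 / l2))" using Cc by simp
    also have "exp (- ln (1 / l2)) = l2" using l2 by (simp add: ln_div)
    finally show ?thesis by simp
  qed
  obtain N u E where code: "is_DI_code \<theta> n N l1 l2 u E" and bnd: "M ^ n \<le> N * (2 ^ n * M ^ D)"
    using achieve[OF th l1 Mp Mth Mth2 D1 q] by blast
  have N1: "N \<ge> 1"
  proof (rule ccontr)
    assume "\<not> N \<ge> 1" then have "N = 0" by simp
    then show False using bnd Mp by simp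
  qed
  have Npos: "0 < real N" using N1 by simp
  have rb: "real M ^ n \<le> real N * (2 ^ n * real M ^ D)"
  proof -
    have "real (M ^ n) \<le> real (N * (2 ^ n * M ^ D))" using bnd by (simp only: of_nat_le_iff)
    then show ?thesis by simp
  qed
  have logN: "real n * log 2 (real M) - real n - real D * log 2 (real M) \<le> log 2 (real N)"
  proof -
    have pos: "0 < (2::real) ^ n * real M ^ D" using Mp by simp
    have "real M ^ n / (2 ^ n * real M ^ D) \<le> real N" using rb pos by (simp add: divide_le_eq)
    then have "log 2 (real M ^ n / (2 ^ n * real M ^ D)) \<le> log 2 (real N)"
      using Mp pos Npos by (subst log_le_cancel_iff) auto
    also have "log 2 (real M ^ n / (2 ^ n * real M ^ D)) = real n * log 2 (real M) - real n - real D * log 2 (real M)"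
      using Mp by (simp add: log_divide log_mult log_nat_power)
    finally show ?thesis .
  qed
  have a1: "1 \<le> a - 1"
  proof -
    have "0 < 1 / \<theta>" using th by simp
    moreover have "1 / \<theta> \<le> max (1 / \<theta>) (1 / (1 - \<theta>))" by (rule max.cobounded1)
    ultimately show ?thesis using A by linarith
  qed
  have la: "0 \<le> log 2 (a - 1)" using a1 by (subst zero_le_log_cancel_iff) auto
  have lM: "log 2 (a - 1) \<le> log 2 (real M)" using Mlo a1 by (subst log_le_cancel_iff) auto
  have num: "(x - b) * log 2 (a - 1) - x \<le> log 2 (real N)"
  proof -
    have "(x - b) * log 2 (a - 1) \<le> (x - real D) * log 2 (real M)"
      using bx Dhi la lM by (intro mult_mono) auto
    also have "\<dots> = real n * log 2 (real M) - real D * log 2 (real M)" by (simp add: x_def algebra_simps)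
    finally show ?thesis using logN by (simp add: x_def)
  qed
  have den: "0 < x * log 2 x" using x1 by simp
  have "lo n = ((x - b) * log 2 (a - 1) - x) / (x * log 2 x)"
    by (simp add: lo_def x_def a_def b_def L_def)
  also have "\<dots> \<le> log 2 (real N) / (x * log 2 x)" using num den by (intro divide_right_mono) auto
  finally have "ereal (lo n) \<le> ereal (log 2 (real N) / (real n * log 2 (real n)))" by (simp add: x_def)
  also have "\<dots> \<le> DI_rate \<theta> n l1 l2" by (rule rate_lower[OF code N1])
  finally show ?thesis using code N1 by blast
qed

lemma upper_point:
  assumes th: "0 < \<theta>" "\<theta> < 1" and l1: "0 < l1" and l2: "0 < l2" and s: "l1 + l2 < 1"
    and n2: "2 \<le> n" and code0: "is_DI_code \<theta> n N0 l1 l2 u0 E0" and N0: "N0 \<ge> 1"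
  shows "DI_rate \<theta> n l1 l2 \<le> ereal (log 2 (2 / (\<theta> * (1 - l1 - l2)) * real n + 1) / log 2 (real n))"
proof -
  define g where "g = 1 - l1 - l2"
  define C where "C = 2 / (\<theta> * g)"
  define x where "x = real n"
  have g: "0 < g" "g < 1" using s l1 l2 by (auto simp: g_def)
  have Cp: "0 < C" using th g by (simp add: C_def)
  have x2: "2 \<le> x" using n2 by (simp add: x_def)
  define K where "K = nat \<lceil>C * x\<rceil>"
  have Cx: "0 < C * x" using Cp x2 by simp
  have Klo: "C * x \<le> real K" unfolding K_def using Cx by linarith
  have Khi: "real K \<le> C * x + 1" unfolding K_def using Cx by linarith
  have Kp: "K > 0" using Klo Cx by linarith
  have CC: "1 / \<theta> < C"
  proof -
    have "1 / \<theta> < 2 / \<theta>" using th by (simp add: divide_strict_right_mono)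
    also have "2 / \<theta> \<le> 2 / (\<theta> * g)" using th g by (intro divide_left_mono) (auto simp: mult_le_cancel_left1)
    finally show ?thesis by (simp add: C_def)
  qed
  have "C \<le> C * x" using Cp x2 by simp
  then have K\<theta>: "1 / \<theta> < real K" using CC Klo by linarith
  have Kth: "1 / real K < \<theta>"
  proof -
    have "1 < \<theta> * real K" using K\<theta> th by (simp add: field_simps)
    moreover have "0 < real K" using Kp by simp
    ultimately show ?thesis by (simp add: divide_less_eq mult.commute)
  qed
  have small: "real n / (real K * \<theta>) < 1 - l1 - l2"
  proof -
    have "x / (real K * \<theta>) \<le> x / (C * x * \<theta>)"
      using Klo th Cx x2 by (intro divide_left_mono mult_right_mono) auto
    also have "\<dots> = 1 / (C * \<theta>)" using x2 by simp
    also have "\<dots> = g / 2" using th g by (simp add: C_def)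
    also have "\<dots> < g" using g by simp
    finally show ?thesis by (simp add: x_def g_def)
  qed
  have bnd: "N \<le> K ^ n" if "is_DI_code \<theta> n N l1 l2 u E" for N u E
    by (rule code_le[OF th(1) that Kp Kth small])
  have "DI_rate \<theta> n l1 l2 \<le> ereal (log 2 (real (K ^ n)) / (real n * log 2 (real n)))"
    by (rule rate_upper[OF bnd code0 N0])
  also have "log 2 (real (K ^ n)) / (real n * log 2 (real n)) = log 2 (real K) / log 2 x"
  proof -
    have "log 2 (real (K ^ n)) = x * log 2 (real K)" using Kp by (simp add: log_nat_power x_def)
    moreover have "0 < x" using x2 by simp
    ultimately show ?thesis by (simp add: x_def)
  qed
  also have "log 2 (real K) / log 2 x \<le> log 2 (C * x + 1) / log 2 x"
  proof (rule divide_right_mono)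
    show "log 2 (real K) \<le> log 2 (C * x + 1)" using Khi Kp by (subst log_le_cancel_iff) auto
    show "0 \<le> log 2 x" using x2 by simp
  qed
  finally show ?thesis by (simp add: C_def g_def x_def)
qed

lemma lower_ev:
  assumes th: "0 < \<theta>" "\<theta> < 1" and l1: "0 < l1" and l2: "0 < l2"
  shows "\<forall>\<^sub>F n in sequentially. \<exists>N u E. is_DI_code \<theta> n N l1 l2 u E \<and> N \<ge> 1 \<and> ereal (lo n) \<le> DI_rate \<theta> n l1 l2"
proof -
  have e1: "\<forall>\<^sub>F n in sequentially. 1 \<le> ln (real n)"
    by (rule ev_at_top) real_asymp
  have e2: "\<forall>\<^sub>F n in sequentially. 3 \<le> n" by (rule eventually_ge_at_top)
  have e3: "\<forall>\<^sub>F n in sequentially. max (1 / \<theta>) (1 / (1 - \<theta>)) + 1 \<le> real n / ln (real n) ^ 2 - 1"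
    by (rule ev_at_top) real_asymp
  have e4: "\<forall>\<^sub>F n in sequentially. 1 \<le> real n / ln (real n) - 1"
    by (rule ev_at_top) real_asymp
  have e5: "\<forall>\<^sub>F n in sequentially. ln (1 / l2) \<le> (real n / ln (real n) - 1) / ((real n / ln (real n) ^ 2) * \<theta>)"
    by (rule ev_at_top) (use th in real_asymp)
  from e1 e2 e3 e4 e5 show ?thesis
  proof eventually_elim
    case (elim n)
    then show ?case using lower_point[OF th l1 l2] by blast
  qed
qed

lemma liminf_ge:
  assumes th: "0 < \<theta>" "\<theta> < 1" and l1: "0 < l1" and l2: "0 < l2"
  shows "1 \<le> liminf (\<lambda>n. DI_rate \<theta> n l1 l2)"
proof -
  have ev: "\<forall>\<^sub>F n in sequentially. ereal (lo n) \<le> DI_rate \<theta> n l1 l2"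
    using lower_ev[OF th l1 l2] by (rule eventually_mono) blast
  have lim: "((\<lambda>n. ereal (lo n)) \<longlongrightarrow> 1) sequentially"
    using lo_lim by (simp add: one_ereal_def)
  have "liminf (\<lambda>n. ereal (lo n)) = 1"
    by (rule lim_imp_Liminf[OF trivial_limit_sequentially lim])
  moreover have "liminf (\<lambda>n. ereal (lo n)) \<le> liminf (\<lambda>n. DI_rate \<theta> n l1 l2)"
    by (rule Liminf_mono[OF ev])
  ultimately show ?thesis by simp
qed

lemma rate_tendsto:
  assumes th: "0 < \<theta>" "\<theta> < 1" and l1: "0 < l1" and l2: "0 < l2" and s: "l1 + l2 < 1"
  shows "((\<lambda>n. DI_rate \<theta> n l1 l2) \<longlongrightarrow> (1::ereal)) sequentially"
proof -
  define C where "C = 2 / (\<theta> * (1 - l1 - l2))"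
  have Cp: "0 < C" using th s by (simp add: C_def)
  have evl: "\<forall>\<^sub>F n in sequentially. ereal (lo n) \<le> DI_rate \<theta> n l1 l2"
    using lower_ev[OF th l1 l2] by (rule eventually_mono) blast
  have evu: "\<forall>\<^sub>F n in sequentially. DI_rate \<theta> n l1 l2 \<le> ereal (log 2 (C * real n + 1) / log 2 (real n))"
  proof -
    have "\<forall>\<^sub>F n in sequentially. 2 \<le> n" by (rule eventually_ge_at_top)
    with lower_ev[OF th l1 l2] show ?thesis
    proof eventually_elim
      case (elim n)
      then obtain N u E where "is_DI_code \<theta> n N l1 l2 u E" "N \<ge> 1" by blast
      from upper_point[OF th l1 l2 s elim(2) this] show ?case by (simp add: C_def)
    qed
  qed
  have lim1: "((\<lambda>n. ereal (lo n)) \<longlongrightarrow> 1) sequentially"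
    using lo_lim by (simp add: one_ereal_def)
  have hl: "((\<lambda>n::nat. log 2 (C * real n + 1) / log 2 (real n)) \<longlongrightarrow> 1) sequentially"
    using Cp by real_asymp
  have lim2: "((\<lambda>n. ereal (log 2 (C * real n + 1) / log 2 (real n))) \<longlongrightarrow> 1) sequentially"
    using hl by (simp add: one_ereal_def)
  show ?thesis by (rule tendsto_sandwich[OF evl evu lim1 lim2])
qed

theorem theorem10:
  fixes \<theta> :: real
  assumes "0 < \<theta>" and "\<theta> < 1"
  shows "C_DI_dot \<theta> = 1 \<and>
    (\<forall>l1 l2. 0 < l1 \<longrightarrow> 0 < l2 \<longrightarrow> l1 + l2 < 1 \<longrightarrow>
       ((\<lambda>n. DI_rate \<theta> n l1 l2) \<longlongrightarrow> (1::ereal)) sequentially)"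
proof
  have th: "0 < \<theta>" "\<theta> < 1" using assms by auto
  show tl: "\<forall>l1 l2. 0 < l1 \<longrightarrow> 0 < l2 \<longrightarrow> l1 + l2 < 1 \<longrightarrow>
       ((\<lambda>n. DI_rate \<theta> n l1 l2) \<longlongrightarrow> (1::ereal)) sequentially"
    using rate_tendsto[OF th] by blast
  have q: "((\<lambda>n. DI_rate \<theta> n (1/4) (1/4)) \<longlongrightarrow> (1::ereal)) sequentially"
    using rate_tendsto[OF th, of "1/4" "1/4"] by simp
  have q1: "liminf (\<lambda>n. DI_rate \<theta> n (1/4) (1/4)) = 1"
    by (rule lim_imp_Liminf[OF trivial_limit_sequentially q])
  have "C_DI_dot \<theta> \<le> (INF l2\<in>{0<..}. liminf (\<lambda>n. DI_rate \<theta> n (1/4) l2))"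
    unfolding C_DI_dot_def by (rule INF_lower) simp
  also have "\<dots> \<le> liminf (\<lambda>n. DI_rate \<theta> n (1/4) (1/4))"
    by (rule INF_lower) simp
  finally have le: "C_DI_dot \<theta> \<le> 1" using q1 by simp
  have ge: "1 \<le> C_DI_dot \<theta>"
    unfolding C_DI_dot_def
    by (intro INF_greatest liminf_ge[OF th]) auto
  show "C_DI_dot \<theta> = 1" using le ge by (rule antisym)
qed

end
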